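(* Let $(X,d)$ be a compact doubling metric space with $\operatorname{diam}(X,d)=1/2$ and $(\mathcal S,D_2)$ a hyperbolic filling with parameters $a\ge\lambda\ge6$. Let $\rho:\mathcal S\to(0,\infty)$ satisfy (H1), (H2) and (H3'). Then there is a constant $K_2\ge1$ such that for all distinct $x,y\in X$ there exists $k_0$ (depending on $x,y$) such that for all $k\ge k_0$, if $u,v\in\mathcal S_k$ with $x\in B_u$, $y\in B_v$, then every path $\gamma$ in $(\mathcal S,D_2)$ joining $u$ and $v$ satisfies $\hat\ell_1(\gamma)\ge K_2^{-1}\pi(c(x,y))$.
   Context: Hyperbolic filling: $X_0\subset X_1\subset\cdots$ increasing, $X_n$ maximal $a^{-n}$-separated in $X$ ($X_0=\{x_0\}$); $\mathcal S_n=\{(x,n):x\in X_n\}$, $\mathcal S=\bigcup_n\mathcal S_n$, $\pi_1(x,n)=x$, $\pi_2(x,n)=n$, $v_0=(x_0,0)$, $B_v=B(\pi_1(v),a^{-\pi_2(v)})$. Each $(x,n)$, $n\ge1$, has a fixed parent $(y,n-1)$ with $d(x,y)=\min_{z\in X_{n-1}}d(x,z)$; genealogy $g(v)=(v_0,\dots,v_k=v)$. Graph $(\mathcal S,D_2)$: edges vertex–parent (vertical) and horizontal edges between distinct $(x,n),(y,n)$ with $B(x,\lambda a^{-n})\cap B(y,\lambda a^{-n})\ne\emptyset$. Paths: vertex sequences with consecutive ones adjacent. For $w\in\mathcal S_k$, $\Gamma_k(w)$: horizontal paths $(u_1,\dots,u_n)$ in $\mathcal S_{k+1}$ with $\pi_1(u_1)\in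 B_w$, $\pi_1(u_n)\notin B(\pi_1(w),2a^{-k})$. $\pi(u)=\prod_{w\in g(u)}\rho(w)$; $\rho^*(u)=\min\{\rho(w):\pi_2(w)=\pi_2(u),D_2(u,w)\le1\}$, $\pi^*(u)$ the same with $\pi$; $L_h(\gamma,\rho)=\sum_{j}\rho^*(u_j)\wedge\rho^*(u_{j+1})$ for horizontal $\gamma=(u_1,\dots,u_N)$. For distinct $x,y$: $\tilde n$ largest with $\{x,y\}\subset B(\tilde z,2a^{-\tilde n})$ for some $(\tilde z,\tilde n)\in\mathcal S$, $c(x,y)$ the set of such $(\tilde z,\tilde n)$, $\pi(c(x,y))=\max_{c(x,y)}\pi$. (H1) $0<\eta_-\le\rho\le\eta_+<1$. (H2) $\pi(u)\le K_0\pi(w)$ for horizontally adjacent $u,w$, some $K_0\ge1$. (H3') for all $k\ge0$, $w\in\mathcal S_k$, $\gamma\in\Gamma_k(w)$: $L_h(\gamma,\rho)\ge1$. Edge length: $\hat\ell_1(\{u,w\})=\pi^*(u)\wedge\pi^*(w)$ for a horizontal edge, and $\hat\ell_1(\{u,w\})=K_0\eta_-^{-1}\pi^*(w)$ if $u$ is the parent of $w$; for a path $\gamma=(v_1,\dots,v_N)$, $\hat\ell_1(\gamma)=\sum_{i=1}^{N-1}\hat\ell_1(\{v_i,v_{i+1}\})$. *)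

theory Defs
  imports "HOL-Analysis.Analysis"
begin

definition Xball :: "'a::metric_space set \<Rightarrow> 'a \<Rightarrow> real \<Rightarrow> 'a set" where
  "Xball X x r = ball x r \<inter> X"

definition doubling :: "'a::metric_space set \<Rightarrow> bool" where
  "doubling X \<longleftrightarrow> (\<exists>N::nat. \<forall>x\<in>X. \<forall>r>0. \<exists>C. finite C \<and> C \<subseteq> X \<and> card C \<le> N \<and>
      Xball X x (2*r) \<subseteq> (\<Union>c\<in>C. Xball X c r))"

definition separated :: "real \<Rightarrow> 'a::metric_space set \<Rightarrow> bool" where
  "separated \<epsilon> A \<longleftrightarrow> (\<forall>x\<in>A. \<forall>y\<in>A. x \<noteq> y \<longrightarrow> dist x y \<ge> \<epsilon>)"

definition maximal_separated :: "real \<Rightarrow> 'a::metric_space set \<Rightarrow> 'a set \<Rightarrow> bool" where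
  "maximal_separated \<epsilon> A X \<longleftrightarrow> A \<subseteq> X \<and> separated \<epsilon> A \<and>
      (\<forall>z\<in>X - A. \<not> separated \<epsilon> (insert z A))"

text \<open>Data: nested sets Xs n, base point x0, and parent map par: the parent of
  (x, Suc n) is (par x (Suc n), n).\<close>
definition hyperbolic_filling ::
  "'a::metric_space set \<Rightarrow> real \<Rightarrow> real \<Rightarrow> 'a \<Rightarrow> (nat \<Rightarrow> 'a set) \<Rightarrow> ('a \<Rightarrow> nat \<Rightarrow> 'a) \<Rightarrow> bool" where
  "hyperbolic_filling X a lam x0 Xs par \<longleftrightarrow>
     Xs 0 = {x0} \<and> x0 \<in> X \<and>
     (\<forall>n. Xs n \<subseteq> Xs (Suc n)) \<and>
     (\<forall>n. maximal_separated (a powi (- int n)) (Xs n) X) \<and>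
     (\<forall>n. \<forall>x\<in>Xs (Suc n). par x (Suc n) \<in> Xs n \<and>
          (\<forall>z\<in>Xs n. dist x (par x (Suc n)) \<le> dist x z))"

definition vertices :: "(nat \<Rightarrow> 'a set) \<Rightarrow> ('a \<times> nat) set" where
  "vertices Xs = {(x,n). x \<in> Xs n}"

definition level :: "(nat \<Rightarrow> 'a set) \<Rightarrow> nat \<Rightarrow> ('a \<times> nat) set" where
  "level Xs k = {(x,n). x \<in> Xs n \<and> n = k}"

definition Bv :: "'a::metric_space set \<Rightarrow> real \<Rightarrow> 'a \<times> nat \<Rightarrow> 'a set" where
  "Bv X a v = Xball X (fst v) (a powi (- int (snd v)))"

definition is_parent :: "(nat \<Rightarrow> 'a set) \<Rightarrow> ('a \<Rightarrow> nat \<Rightarrow> 'a) \<Rightarrow> 'a \<times> nat \<Rightarrow> 'a \<times> nat \<Rightarrow> bool" where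
  "is_parent Xs par u w \<longleftrightarrow> w \<in> vertices Xs \<and> snd w \<ge> 1 \<and>
      u = (par (fst w) (snd w), snd w - 1)"

definition horiz_adj ::
  "'a::metric_space set \<Rightarrow> real \<Rightarrow> real \<Rightarrow> (nat \<Rightarrow> 'a set) \<Rightarrow> 'a \<times> nat \<Rightarrow> 'a \<times> nat \<Rightarrow> bool" where
  "horiz_adj X a lam Xs u w \<longleftrightarrow> u \<in> vertices Xs \<and> w \<in> vertices Xs \<and> snd u = snd w \<and> u \<noteq> w \<and>
      Xball X (fst u) (lam * a powi (- int (snd u))) \<inter> Xball X (fst w) (lam * a powi (- int (snd w))) \<noteq> {}"

definition adj ::
  "'a::metric_space set \<Rightarrow> real \<Rightarrow> real \<Rightarrow> (nat \<Rightarrow> 'a set) \<Rightarrow> ('a \<Rightarrow> nat \<Rightarrow> 'a) \<Rightarrow> 'a \<times> nat \<Rightarrow> 'a \<times> nat \<Rightarrow> bool" where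
  "adj X a lam Xs par u w \<longleftrightarrow> is_parent Xs par u w \<or> is_parent Xs par w u \<or> horiz_adj X a lam Xs u w"

definition is_path ::
  "'a::metric_space set \<Rightarrow> real \<Rightarrow> real \<Rightarrow> (nat \<Rightarrow> 'a set) \<Rightarrow> ('a \<Rightarrow> nat \<Rightarrow> 'a) \<Rightarrow> ('a \<times> nat) list \<Rightarrow> bool" where
  "is_path X a lam Xs par \<gamma> \<longleftrightarrow> \<gamma> \<noteq> [] \<and> set \<gamma> \<subseteq> vertices Xs \<and>
      (\<forall>i. Suc i < length \<gamma> \<longrightarrow> adj X a lam Xs par (\<gamma> ! i) (\<gamma> ! Suc i))"

definition is_horiz_path ::
  "'a::metric_space set \<Rightarrow> real \<Rightarrow> real \<Rightarrow> (nat \<Rightarrow> 'a set) \<Rightarrow> ('a \<times> nat) list \<Rightarrow> bool" where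
  "is_horiz_path X a lam Xs \<gamma> \<longleftrightarrow> \<gamma> \<noteq> [] \<and> set \<gamma> \<subseteq> vertices Xs \<and>
      (\<forall>i. Suc i < length \<gamma> \<longrightarrow> horiz_adj X a lam Xs (\<gamma> ! i) (\<gamma> ! Suc i))"

definition Gamma ::
  "'a::metric_space set \<Rightarrow> real \<Rightarrow> real \<Rightarrow> (nat \<Rightarrow> 'a set) \<Rightarrow> nat \<Rightarrow> 'a \<times> nat \<Rightarrow> ('a \<times> nat) list set" where
  "Gamma X a lam Xs k w = {\<gamma>. is_horiz_path X a lam Xs \<gamma> \<and> set \<gamma> \<subseteq> level Xs (Suc k) \<and>
      fst (hd \<gamma>) \<in> Bv X a w \<and> fst (last \<gamma>) \<notin> Xball X (fst w) (2 * a powi (- int k))}"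

fun piw :: "('a \<times> nat \<Rightarrow> real) \<Rightarrow> ('a \<Rightarrow> nat \<Rightarrow> 'a) \<Rightarrow> 'a \<times> nat \<Rightarrow> real" where
  "piw \<rho> par (x, 0) = \<rho> (x, 0)"
| "piw \<rho> par (x, Suc n) = \<rho> (x, Suc n) * piw \<rho> par (par x (Suc n), n)"

definition near_same_level ::
  "'a::metric_space set \<Rightarrow> real \<Rightarrow> real \<Rightarrow> (nat \<Rightarrow> 'a set) \<Rightarrow> ('a \<Rightarrow> nat \<Rightarrow> 'a) \<Rightarrow> 'a \<times> nat \<Rightarrow> ('a \<times> nat) set" where
  "near_same_level X a lam Xs par u = {w \<in> vertices Xs. snd w = snd u \<and> (w = u \<or> adj X a lam Xs par u w)}"

definition star_of ::
  "('a \<times> nat \<Rightarrow> real) \<Rightarrow> 'a::metric_space set \<Rightarrow> real \<Rightarrow> real \<Rightarrow> (nat \<Rightarrow> 'a set) \<Rightarrow> ('a \<Rightarrow> nat \<Rightarrow> 'a) \<Rightarrow> 'a \<times> nat \<Rightarrow> real" where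
  "star_of f X a lam Xs par u = Min (f ` near_same_level X a lam Xs par u)"

definition L_h ::
  "('a \<times> nat \<Rightarrow> real) \<Rightarrow> 'a::metric_space set \<Rightarrow> real \<Rightarrow> real \<Rightarrow> (nat \<Rightarrow> 'a set) \<Rightarrow> ('a \<Rightarrow> nat \<Rightarrow> 'a) \<Rightarrow> ('a \<times> nat) list \<Rightarrow> real" where
  "L_h \<rho> X a lam Xs par \<gamma> = (\<Sum>j<length \<gamma> - 1.
      min (star_of \<rho> X a lam Xs par (\<gamma> ! j)) (star_of \<rho> X a lam Xs par (\<gamma> ! Suc j)))"

definition edge_len ::
  "('a \<times> nat \<Rightarrow> real) \<Rightarrow> real \<Rightarrow> real \<Rightarrow> 'a::metric_space set \<Rightarrow> real \<Rightarrow> real \<Rightarrow> (nat \<Rightarrow> 'a set) \<Rightarrow> ('a \<Rightarrow> nat \<Rightarrow> 'a)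
     \<Rightarrow> 'a \<times> nat \<Rightarrow> 'a \<times> nat \<Rightarrow> real" where
  "edge_len \<rho> K0 \<eta>m X a lam Xs par u w =
     (let ps = star_of (piw \<rho> par) X a lam Xs par in
      if snd u = snd w then min (ps u) (ps w)
      else if is_parent Xs par u w then K0 / \<eta>m * ps w
      else K0 / \<eta>m * ps u)"

definition path_len ::
  "('a \<times> nat \<Rightarrow> real) \<Rightarrow> real \<Rightarrow> real \<Rightarrow> 'a::metric_space set \<Rightarrow> real \<Rightarrow> real \<Rightarrow> (nat \<Rightarrow> 'a set) \<Rightarrow> ('a \<Rightarrow> nat \<Rightarrow> 'a)
     \<Rightarrow> ('a \<times> nat) list \<Rightarrow> real" where
  "path_len \<rho> K0 \<eta>m X a lam Xs par \<gamma> =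
     (\<Sum>i<length \<gamma> - 1. edge_len \<rho> K0 \<eta>m X a lam Xs par (\<gamma> ! i) (\<gamma> ! Suc i))"

definition c_level :: "'a::metric_space set \<Rightarrow> real \<Rightarrow> (nat \<Rightarrow> 'a set) \<Rightarrow> 'a \<Rightarrow> 'a \<Rightarrow> nat" where
  "c_level X a Xs x y = (GREATEST n. \<exists>z\<in>Xs n. {x, y} \<subseteq> Xball X z (2 * a powi (- int n)))"

definition c_set :: "'a::metric_space set \<Rightarrow> real \<Rightarrow> (nat \<Rightarrow> 'a set) \<Rightarrow> 'a \<Rightarrow> 'a \<Rightarrow> ('a \<times> nat) set" where
  "c_set X a Xs x y = (let n = c_level X a Xs x y in
      {(z, n) | z. z \<in> Xs n \<and> {x, y} \<subseteq> Xball X z (2 * a powi (- int n))})"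

definition pi_c :: "('a \<times> nat \<Rightarrow> real) \<Rightarrow> ('a \<Rightarrow> nat \<Rightarrow> 'a) \<Rightarrow> 'a::metric_space set \<Rightarrow> real \<Rightarrow> (nat \<Rightarrow> 'a set) \<Rightarrow> 'a \<Rightarrow> 'a \<Rightarrow> real" where
  "pi_c \<rho> par X a Xs x y = Max (piw \<rho> par ` c_set X a Xs x y)"

end

theory Submission imports Defs begin

fun lcost :: "('v \<Rightarrow> 'v \<Rightarrow> real) \<Rightarrow> 'v list \<Rightarrow> real" where
  "lcost f [] = 0"
| "lcost f [_] = 0"
| "lcost f (p # q # r) = f p q + lcost f (q # r)"

lemma lcost_sum: "(\<Sum>i<length xs - 1. f (xs ! i) (xs ! Suc i)) = lcost f xs"
proof (induction f xs rule: lcost.induct)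
  case (3 f p q r)
  have "(\<Sum>i<length (p # q # r) - 1. f ((p # q # r) ! i) ((p # q # r) ! Suc i))
      = (\<Sum>i<Suc (length (q # r) - 1). f ((p # q # r) ! i) ((p # q # r) ! Suc i))" by simp
  also have "\<dots> = f p q + (\<Sum>i<length (q # r) - 1. f ((q # r) ! i) ((q # r) ! Suc i))"
    by (subst sum.lessThan_Suc_shift) simp
  finally show ?case using 3 by simp
qed auto

lemma lcost_append: "lcost f (xs @ y # ys) = lcost f (xs @ [y]) + lcost f (y # ys)"
  by (induction f xs rule: lcost.induct) auto

lemma lcost_snoc: "xs \<noteq> [] \<Longrightarrow> lcost f (xs @ [y]) = lcost f xs + f (last xs) y"
  by (induction f xs rule: lcost.induct) auto

lemma lcost_mono: "successively (\<lambda>p q. f p q \<le> g p q) xs \<Longrightarrow> lcost f xs \<le> lcost g xs"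
  by (induction f xs rule: lcost.induct) auto

lemma lcost_cong: "successively (\<lambda>p q. f p q = g p q) xs \<Longrightarrow> lcost f xs = lcost g xs"
  by (induction f xs rule: lcost.induct) auto

lemma lcost_nonneg: "successively (\<lambda>p q. 0 \<le> f p q) xs \<Longrightarrow> 0 \<le> lcost f xs"
  by (induction f xs rule: lcost.induct) auto

lemma lcost_scale: "lcost (\<lambda>p q. c * f p q) xs = c * lcost f xs"
  by (induction f xs rule: lcost.induct) (auto simp: algebra_simps)

lemma lcost_glue: "xs \<noteq> [] \<Longrightarrow> lcost f (xs @ T) = lcost f xs + lcost f (last xs # T)"
  by (induction f xs rule: lcost.induct) auto

lemma lcost_join: "xs \<noteq> [] \<Longrightarrow> ys \<noteq> [] \<Longrightarrow> lcost f (xs @ ys) = lcost f xs + f (last xs) (hd ys) + lcost f ys"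
  using lcost_append[of f xs "hd ys" "tl ys"] lcost_snoc[of xs f "hd ys"] by simp

locale HF =
  fixes X :: "'a::metric_space set" and a lam :: real and x0 :: 'a
    and Xs :: "nat \<Rightarrow> 'a set" and par :: "'a \<Rightarrow> nat \<Rightarrow> 'a"
    and \<rho> :: "'a \<times> nat \<Rightarrow> real" and \<eta>m \<eta>p K0 :: real
  assumes cX: "compact X"
    and hf: "hyperbolic_filling X a lam x0 Xs par"
    and alam: "a \<ge> lam" and lam6: "lam \<ge> 6"
    and rho_pos: "\<forall>v\<in>vertices Xs. \<rho> v > 0"
    and H1: "0 < \<eta>m" "\<eta>m \<le> \<eta>p" "\<eta>p < 1" "\<forall>v\<in>vertices Xs. \<eta>m \<le> \<rho> v \<and> \<rho> v \<le> \<eta>p"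
    and H2: "K0 \<ge> 1" "\<forall>u w. horiz_adj X a lam Xs u w \<longrightarrow> piw \<rho> par u \<le> K0 * piw \<rho> par w"
    and H3': "\<forall>k. \<forall>w\<in>level Xs k. \<forall>\<gamma>\<in>Gamma X a lam Xs k w. L_h \<rho> X a lam Xs par \<gamma> \<ge> 1"
begin

abbreviation r :: "nat \<Rightarrow> real" where "r n \<equiv> a powi (- int n)"
abbreviation V where "V \<equiv> vertices Xs"
abbreviation N where "N \<equiv> near_same_level X a lam Xs par"
abbreviation pw where "pw \<equiv> piw \<rho> par"
abbreviation ps where "ps \<equiv> star_of (piw \<rho> par) X a lam Xs par"
abbreviation rs where "rs \<equiv> star_of \<rho> X a lam Xs par"
abbreviation E where "E \<equiv> edge_len \<rho> K0 \<eta>m X a lam Xs par"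
abbreviation hadj where "hadj \<equiv> horiz_adj X a lam Xs"
abbreviation adj' where "adj' \<equiv> adj X a lam Xs par"
abbreviation hc where "hc \<equiv> (\<lambda>p q. min (ps p) (ps q))"
abbreviation rc where "rc \<equiv> (\<lambda>p q. min (rs p) (rs q))"

lemma a6: "a \<ge> 6" using alam lam6 by linarith
lemma a_pos: "a > 0" using a6 by linarith

lemma r_eq: "r n = inverse (a ^ n)"
  using a_pos by (metis power_int_minus power_int_of_nat)

lemma r_pos: "r n > 0" using a_pos by (simp add: r_eq)

lemma r_Suc' [simp]: "a powi (- 1 - int n) = r n / a"
proof -
  have "a powi (- 1 - int n) = a powi (-int (Suc n))" by simp
  also have "\<dots> = inverse (a^Suc n)" by (rule r_eq)
  also have "\<dots> = r n / a" by (simp only: r_eq) (simp add: field_simps)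
  finally show ?thesis .
qed

lemma r_Suc: "r (Suc n) = r n / a"
  by simp

lemma r_Suc_le: "r (Suc n) \<le> r n / 6"
  unfolding r_Suc using a6 r_pos[of n] by (intro divide_left_mono) auto

lemma lam_r: "lam * r (Suc n) \<le> r n"
proof -
  have "lam * r (Suc n) = (lam / a) * r n" by simp
  also have "\<dots> \<le> 1 * r n" using alam a_pos r_pos[of n]
    by (intro mult_right_mono) auto
  finally show ?thesis by simp
qed

lemma r_le1: "r n \<le> 1"
  using a6 by (simp add: r_eq one_le_power inverse_le_1_iff)

lemma hfD: "Xs 0 = {x0}" "x0 \<in> X" "\<And>n. maximal_separated (r n) (Xs n) X"
  "\<And>n x. x \<in> Xs (Suc n) \<Longrightarrow> par x (Suc n) \<in> Xs n"
  "\<And>n x z. x \<in> Xs (Suc n) \<Longrightarrow> z \<in> Xs n \<Longrightarrow> dist x (par x (Suc n)) \<le> dist x z"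
  using hf unfolding hyperbolic_filling_def by auto

lemma Xs_sub: "Xs n \<subseteq> X"
  using hfD(3)[of n] unfolding maximal_separated_def by auto

lemma Xs_sep: "separated (r n) (Xs n)"
  using hfD(3)[of n] unfolding maximal_separated_def by auto

lemma cover: assumes "p \<in> X" shows "\<exists>z\<in>Xs n. dist p z < r n"
proof (cases "p \<in> Xs n")
  case True then show ?thesis using r_pos[of n] by (intro bexI[of _ p]) auto
next
  case False
  then have "\<not> separated (r n) (insert p (Xs n))"
    using hfD(3)[of n] assms unfolding maximal_separated_def by auto
  then obtain u v where uv: "u \<in> insert p (Xs n)" "v \<in> insert p (Xs n)" "u \<noteq> v" "dist u v < r n"
    unfolding separated_def by force
  show ?thesis
  proof (cases "u = p")
    case True then show ?thesis using uv by auto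
  next
    case F: False
    show ?thesis
    proof (cases "v = p")
      case True then show ?thesis using uv F by (auto simp: dist_commute)
    next
      case False then show ?thesis using uv F Xs_sep[of n] unfolding separated_def by force
    qed
  qed
qed

lemma par_in: "x \<in> Xs (Suc n) \<Longrightarrow> par x (Suc n) \<in> Xs n" by (rule hfD(4))

lemma par_dist: assumes "x \<in> Xs (Suc n)" shows "dist x (par x (Suc n)) < r n"
proof -
  obtain z where "z \<in> Xs n" "dist x z < r n" using cover[of x n] Xs_sub assms by auto
  then show ?thesis using hfD(5)[OF assms, of z] by linarith
qed

lemma finite_Xs: "finite (Xs n)"
proof (rule ccontr)
  assume inf: "infinite (Xs n)"
  obtain p where "p \<in> X" "p islimpt (Xs n)"
    using cX inf Xs_sub unfolding compact_eq_Bolzano_Weierstrass by blast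
  then obtain y1 where y1: "y1 \<in> Xs n" "y1 \<noteq> p" "dist y1 p < r n / 2"
    using r_pos[of n] unfolding islimpt_approachable by (metis half_gt_zero)
  then have "dist y1 p > 0" by simp
  then obtain y2 where y2: "y2 \<in> Xs n" "y2 \<noteq> p" "dist y2 p < dist y1 p"
    using \<open>p islimpt (Xs n)\<close> unfolding islimpt_approachable by blast
  then have "y1 \<noteq> y2" by auto
  moreover have "dist y1 y2 < r n" using y1 y2 dist_triangle[of y1 y2 p] by (simp add: dist_commute)
  ultimately show False using Xs_sep[of n] y1 y2 unfolding separated_def by force
qed

lemma V_iff[simp]: "(x, n) \<in> V \<longleftrightarrow> x \<in> Xs n" by (simp add: vertices_def)
lemma level_iff[simp]: "(x, n) \<in> level Xs k \<longleftrightarrow> x \<in> Xs n \<and> n = k" by (simp add: level_def)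

lemma V_X: "v \<in> V \<Longrightarrow> fst v \<in> X"
  using Xs_sub by (cases v) auto

lemma is_parent_iff: "is_parent Xs par u w \<longleftrightarrow> w \<in> V \<and> (\<exists>l. snd w = Suc l \<and> u = (par (fst w) (Suc l), l))"
  unfolding is_parent_def by (cases "snd w") auto

lemma adj_cases:
  assumes "adj' u w"
  shows "(snd u = snd w \<and> hadj u w) \<or>
         (w \<in> V \<and> (\<exists>l. snd w = Suc l \<and> u = (par (fst w) (Suc l), l))) \<or>
         (u \<in> V \<and> (\<exists>l. snd u = Suc l \<and> w = (par (fst u) (Suc l), l)))"
  using assms unfolding adj_def is_parent_iff horiz_adj_def by auto

lemma hadj_adj: "hadj u w \<Longrightarrow> adj' u w" unfolding adj_def by auto

lemma hadj_V: "hadj u w \<Longrightarrow> u \<in> V \<and> w \<in> V \<and> snd u = snd w \<and> u \<noteq> w"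
  unfolding horiz_adj_def by auto

lemma hadj_dist: assumes "hadj u w" shows "dist (fst u) (fst w) < 2 * lam * r (snd u)"
proof -
  obtain pt where "pt \<in> Xball X (fst u) (lam * r (snd u))" "pt \<in> Xball X (fst w) (lam * r (snd w))"
    using assms unfolding horiz_adj_def by blast
  moreover have "snd u = snd w" using assms unfolding horiz_adj_def by auto
  ultimately have "dist (fst u) pt < lam * r (snd u)" "dist (fst w) pt < lam * r (snd u)"
    unfolding Xball_def by auto
  then show ?thesis using dist_triangle[of "fst u" "fst w" pt] by (simp add: dist_commute)
qed

lemma hadj_dist': assumes "hadj u w" "snd u = Suc l" shows "dist (fst u) (fst w) < 2 * r l"
  using hadj_dist[OF assms(1)] lam_r[of l] assms(2) by simp

lemma near_witness:
  assumes "v \<in> V" "w \<in> V" "snd v = snd w" "pt \<in> X"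
    "dist (fst v) pt < lam * r (snd v)" "dist (fst w) pt < lam * r (snd v)"
  shows "v = w \<or> hadj v w"
proof (cases "v = w")
  case False
  have "pt \<in> Xball X (fst v) (lam * r (snd v)) \<inter> Xball X (fst w) (lam * r (snd w))"
    using assms unfolding Xball_def by auto
  then show ?thesis using False assms unfolding horiz_adj_def by blast
qed simp

lemma N_iff: "q \<in> N p \<longleftrightarrow> q \<in> V \<and> snd q = snd p \<and> (q = p \<or> hadj p q)"
  unfolding near_same_level_def adj_def is_parent_iff by auto

lemma near_witness_N:
  assumes "v \<in> V" "w \<in> V" "snd v = snd w" "pt \<in> X"
    "dist (fst v) pt < lam * r (snd v)" "dist (fst w) pt < lam * r (snd v)"
  shows "w \<in> N v"
  using near_witness[OF assms] assms(2,3) unfolding N_iff by auto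

lemma N_finite: "finite (N p)"
proof -
  have "N p \<subseteq> (\<lambda>x. (x, snd p)) ` Xs (snd p)"
  proof
    fix q assume "q \<in> N p"
    then have "q \<in> V" "snd q = snd p" unfolding N_iff by auto
    then show "q \<in> (\<lambda>x. (x, snd p)) ` Xs (snd p)"
      by (cases q) (auto simp: image_iff)
  qed
  then show ?thesis using finite_Xs by (meson finite_surj)
qed

lemma N_self: "p \<in> V \<Longrightarrow> p \<in> N p" unfolding N_iff by auto

lemma star_le: "p \<in> V \<Longrightarrow> star_of f X a lam Xs par p \<le> f p"
  unfolding star_of_def using N_finite N_self by (intro Min_le) auto

lemma star_ge: "p \<in> V \<Longrightarrow> (\<And>q. q \<in> N p \<Longrightarrow> c \<le> f q) \<Longrightarrow> c \<le> star_of f X a lam Xs par p"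
proof -
  assume p: "p \<in> V" and h: "\<And>q. q \<in> N p \<Longrightarrow> c \<le> f q"
  have "N p \<noteq> {}" using N_self[OF p] by auto
  then show ?thesis unfolding star_of_def using N_finite h by (subst Min_ge_iff) auto
qed

lemma pw_pos: "x \<in> Xs n \<Longrightarrow> pw (x, n) > 0"
proof (induction n arbitrary: x)
  case 0 then show ?case using rho_pos by simp
next
  case (Suc n) then show ?case using rho_pos par_in by simp
qed

lemma pw_pos': "v \<in> V \<Longrightarrow> pw v > 0" using pw_pos by (cases v) auto

lemma rho_lb: "v \<in> V \<Longrightarrow> \<eta>m \<le> \<rho> v" using H1(4) by auto

lemma ps_nonneg: "p \<in> V \<Longrightarrow> 0 \<le> ps p"
  by (rule star_ge) (auto simp: N_iff less_imp_le[OF pw_pos'])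

lemma rs_nonneg: "p \<in> V \<Longrightarrow> 0 \<le> rs p"
  by (rule star_ge) (use rho_pos in \<open>auto simp: N_iff less_imp_le\<close>)

lemma ps_K0: assumes "p \<in> V" shows "pw p / K0 \<le> ps p"
proof (rule star_ge[OF assms])
  fix q assume "q \<in> N p"
  then have "q = p \<or> hadj p q" unfolding N_iff by auto
  then show "pw p / K0 \<le> pw q"
  proof
    assume "q = p"
    then show ?thesis using pw_pos'[OF assms] H2(1) by (simp add: divide_le_eq)
  next
    assume "hadj p q"
    then have "pw p \<le> K0 * pw q" using H2(2) by blast
    then show ?thesis using H2(1) by (simp add: divide_le_eq mult.commute)
  qed
qed

lemma vert_cost: assumes "x \<in> Xs (Suc l)"
  shows "pw (par x (Suc l), l) \<le> K0 / \<eta>m * ps (x, Suc l)"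
proof -
  have v: "(x, Suc l) \<in> V" using assms by simp
  have pp: "pw (par x (Suc l), l) > 0" using pw_pos par_in[OF assms] by auto
  have rl: "\<eta>m \<le> \<rho> (x, Suc l)" using rho_lb[OF v] .
  have "pw (par x (Suc l), l) \<le> \<rho> (x, Suc l) / \<eta>m * pw (par x (Suc l), l)"
    using rl pp H1(1) by (simp add: field_simps)
  also have "\<dots> = (K0 / \<eta>m) * (pw (x, Suc l) / K0)"
    using H2(1) by simp
  also have "\<dots> \<le> (K0 / \<eta>m) * ps (x, Suc l)"
    using ps_K0[OF v] H2(1) H1(1) by (intro mult_left_mono) auto
  finally show ?thesis .
qed

lemma E_horiz: "snd u = snd w \<Longrightarrow> E u w = min (ps u) (ps w)"
  unfolding edge_len_def Let_def by simp

lemma E_up: "E (x, Suc l) (par x (Suc l), l) = K0 / \<eta>m * ps (x, Suc l)"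
  unfolding edge_len_def Let_def is_parent_iff by simp

lemma E_down: "x \<in> Xs (Suc l) \<Longrightarrow> E (par x (Suc l), l) (x, Suc l) = K0 / \<eta>m * ps (x, Suc l)"
  unfolding edge_len_def Let_def is_parent_iff by simp

lemma E_nonneg: assumes "u \<in> V" "w \<in> V" shows "0 \<le> E u w"
  using ps_nonneg[OF assms(1)] ps_nonneg[OF assms(2)] H1(1) H2(1)
  unfolding edge_len_def Let_def by auto


lemma lam_ge: "c \<le> 6 \<Longrightarrow> c * r l \<le> lam * r l"
  using lam6 r_pos[of l] by (intro mult_right_mono) auto

lemma lam_r_pos: "0 < lam * r l" using lam6 r_pos[of l] by simp

lemma V_level: "p \<in> V \<Longrightarrow> snd p = k \<Longrightarrow> p \<in> level Xs k" by (cases p) auto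
lemma V_fst: "p \<in> V \<Longrightarrow> snd p = k \<Longrightarrow> fst p \<in> Xs k" by (cases p) auto

lemma succ_all: "(\<And>x y. x \<in> set xs \<Longrightarrow> y \<in> set xs \<Longrightarrow> P x y) \<Longrightarrow> successively P xs"
  by (induction xs rule: induct_list012) auto

lemma star_le_N: "q \<in> N p \<Longrightarrow> star_of f X a lam Xs par p \<le> f q"
  unfolding star_of_def using N_finite by (intro Min_le) auto

lemma hc_nonneg: "set xs \<subseteq> V \<Longrightarrow> 0 \<le> lcost hc xs"
  by (intro lcost_nonneg succ_all) (auto intro!: ps_nonneg)

lemma E_cost_nonneg: "set xs \<subseteq> V \<Longrightarrow> 0 \<le> lcost E xs"
  by (intro lcost_nonneg succ_all) (auto intro!: E_nonneg)

lemma ps_child_bound: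
  assumes W: "W \<in> V" "snd W = l" and p: "p \<in> V" "snd p = Suc l"
    and d: "dist (fst W) (fst p) < 4 * r l"
  shows "ps W * rs p \<le> ps p"
proof (rule star_ge[OF p(1)])
  fix q assume q: "q \<in> N p"
  then have qV: "q \<in> V" and ql: "snd q = Suc l" and qd: "q = p \<or> hadj p q"
    using p unfolding N_iff by auto
  have dpq: "dist (fst p) (fst q) < 2 * r l"
    using qd hadj_dist'[of p q l] p r_pos[of l] by auto
  define x where "x = fst q"
  have qx: "q = (x, Suc l)" using ql x_def by (cases q) auto
  have xX: "x \<in> Xs (Suc l)" using qV qx by simp
  define P where "P = (par x (Suc l), l)"
  have PV: "P \<in> V" unfolding P_def using par_in[OF xX] by simp
  have dP: "dist x (fst P) < r l" unfolding P_def using par_dist[OF xX] by simp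
  have dWq: "dist (fst W) x < lam * r l"
    using d dpq dist_triangle[of "fst W" "fst q" "fst p"] lam_ge[of 6 l] unfolding x_def
    by linarith
  have xXX: "x \<in> X" using xX Xs_sub by auto
  have "P \<in> N W"
    apply (rule near_witness_N[OF W(1) PV _ xXX])
    using W(2) dWq dP lam_ge[of 1 l] unfolding P_def
    by (auto simp: dist_commute)
  then have h1: "ps W \<le> pw P" by (rule star_le_N)
  have h2: "rs p \<le> \<rho> q" using q by (rule star_le_N)
  have "ps W * rs p \<le> pw P * \<rho> q"
    using h1 h2 ps_nonneg[OF W(1)] rs_nonneg[OF p(1)] pw_pos'[OF PV]
    by (intro mult_mono) auto
  also have "\<dots> = pw q" unfolding qx P_def by simp
  finally show "ps W * rs p \<le> pw q" .
qed

lemma cross_cost: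
  assumes W: "W \<in> V" "snd W = l" and seg: "set seg \<subseteq> V"
    "\<forall>p\<in>set seg. snd p = Suc l \<and> dist (fst W) (fst p) < 4 * r l"
  shows "ps W * lcost rc seg \<le> lcost hc seg"
proof -
  have "ps W * lcost rc seg = lcost (\<lambda>p q. ps W * rc p q) seg" by (simp add: lcost_scale)
  also have "\<dots> \<le> lcost hc seg"
  proof (intro lcost_mono succ_all)
    fix p q assume pq: "p \<in> set seg" "q \<in> set seg"
    have a1: "ps W * rs p \<le> ps p" using ps_child_bound[OF W, of p] pq seg by auto
    have a2: "ps W * rs q \<le> ps q" using ps_child_bound[OF W, of q] pq seg by auto
    have "ps W * min (rs p) (rs q) = min (ps W * rs p) (ps W * rs q)"
      using ps_nonneg[OF W(1)] by (simp add: min_mult_distrib_left)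
    then show "ps W * rc p q \<le> hc p q" using a1 a2 by linarith
  qed
  finally show ?thesis .
qed

lemma H3_use:
  assumes W: "W \<in> V" "snd W = l" and seg: "seg \<noteq> []" "set seg \<subseteq> V"
    "\<forall>p\<in>set seg. snd p = Suc l" "successively hadj seg"
    and d1: "dist (fst W) (fst (hd seg)) < r l" and d2: "dist (fst W) (fst (last seg)) \<ge> 2 * r l"
  shows "1 \<le> lcost rc seg"
proof -
  have WL: "W \<in> level Xs l" using W by (cases W) auto
  have "seg \<in> Gamma X a lam Xs l W"
    unfolding Gamma_def is_horiz_path_def
  proof (intro CollectI conjI)
    show "seg \<noteq> []" "set seg \<subseteq> V" by fact+
    show "\<forall>i. Suc i < length seg \<longrightarrow> hadj (seg ! i) (seg ! Suc i)"
      using seg(4) successively_conv_nth by blast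
    show "set seg \<subseteq> level Xs (Suc l)"
    proof
      fix p assume "p \<in> set seg"
      then show "p \<in> level Xs (Suc l)" using seg V_level by blast
    qed
    show "fst (hd seg) \<in> Bv X a W"
    proof -
      have "hd seg \<in> V" using seg(2) hd_in_set[OF seg(1)] by blast
      then show ?thesis unfolding Bv_def Xball_def using d1 W V_X[of "hd seg"] by auto
    qed
    show "fst (last seg) \<notin> Xball X (fst W) (2 * r l)"
      unfolding Xball_def using d2 by auto
  qed
  then have "1 \<le> L_h \<rho> X a lam Xs par seg" using H3' WL by blast
  moreover have "L_h \<rho> X a lam Xs par seg = lcost rc seg"
    unfolding L_h_def using lcost_sum[of rc seg] by simp
  ultimately show ?thesis by simp
qed

lemma cross_decomp:
  "run \<noteq> [] \<Longrightarrow> set run \<subseteq> V \<Longrightarrow> \<forall>p\<in>set run. snd p = Suc l \<Longrightarrow> successively hadj run \<Longrightarrow>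
   \<exists>Q. Q \<noteq> [] \<and> set Q \<subseteq> V \<and> (\<forall>q\<in>set Q. snd q = l) \<and> successively hadj Q \<and>
       hd Q = (par (fst (hd run)) (Suc l), l) \<and> dist (fst (last Q)) (fst (last run)) < 2 * r l \<and>
       lcost hc Q \<le> lcost hc run"
proof (induction "length run" arbitrary: run rule: less_induct)
  case less
  define h where "h = hd run"
  define W where "W = (par (fst h) (Suc l), l)"
  have hin: "h \<in> set run" unfolding h_def using less.prems by simp
  have hX: "fst h \<in> Xs (Suc l)" using hin less.prems(2,3) V_fst by blast
  have WV: "W \<in> V" unfolding W_def using par_in[OF hX] by simp
  have Wl: "snd W = l" unfolding W_def by simp
  have dWh: "dist (fst W) (fst h) < r l" unfolding W_def using par_dist[OF hX] by (simp add: dist_commute)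
  define P where "P = (\<lambda>v::'a \<times> nat. dist (fst W) (fst v) < 2 * r l)"
  show ?case
  proof (cases "\<forall>v\<in>set run. P v")
    case True
    show ?thesis
    proof (intro exI[of _ "[W]"] conjI)
      show "dist (fst (last [W])) (fst (last run)) < 2 * r l"
        using True less.prems(1) unfolding P_def by simp
      show "lcost hc [W] \<le> lcost hc run" using hc_nonneg[OF less.prems(2)] by simp
    qed (use WV Wl W_def h_def in auto)
  next
    case False
    define pre where "pre = takeWhile P run"
    define rest where "rest = dropWhile P run"
    have split: "run = pre @ rest" unfolding pre_def rest_def by simp
    have rne: "rest \<noteq> []"
    proof
      assume "rest = []"
      then have "run = pre" using split by simp
      then have "\<forall>v\<in>set run. P v" unfolding pre_def by (metis set_takeWhileD)
      then show False using False by blast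
    qed
    have nP: "\<not> P (hd rest)" unfolding rest_def using rne hd_dropWhile rest_def by blast
    have Ph: "P h" unfolding P_def using dWh r_pos[of l] by simp
    have pne: "pre \<noteq> []" unfolding pre_def using Ph less.prems(1) h_def
      by (simp add: takeWhile_eq_Nil_iff)
    have preP: "\<forall>v\<in>set pre. P v" unfolding pre_def by (auto dest: set_takeWhileD)
    have sr: "successively hadj pre" "successively hadj rest" "hadj (last pre) (hd rest)"
      using less.prems(4) pne rne unfolding split successively_append_iff by auto
    define seg where "seg = pre @ [hd rest]"
    have lastpre: "last pre \<in> set pre" using pne by simp
    have hdrest: "hd rest \<in> set rest" using rne by simp
    have setsub: "set pre \<subseteq> set run" "set rest \<subseteq> set run" using split by auto
    have lvl_lp: "snd (last pre) = Suc l" using lastpre setsub less.prems(3) by auto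
    have d_lp: "dist (fst (last pre)) (fst (hd rest)) < 2 * r l"
      using hadj_dist'[OF sr(3) lvl_lp] .
    have "dist (fst W) (fst (last pre)) < 2 * r l" using preP lastpre unfolding P_def by blast
    then have d_hr: "dist (fst W) (fst (hd rest)) < 4 * r l"
      using d_lp dist_triangle[of "fst W" "fst (hd rest)" "fst (last pre)"] by linarith
    have segV: "set seg \<subseteq> V" using setsub hdrest less.prems(2) unfolding seg_def by auto
    have segl: "\<forall>p\<in>set seg. snd p = Suc l" using setsub hdrest less.prems(3) unfolding seg_def by auto
    have segs: "successively hadj seg" using sr pne unfolding seg_def successively_append_iff by auto
    have hdseg: "hd seg = h" unfolding seg_def h_def split using pne by simp
    have lastseg: "last seg = hd rest" unfolding seg_def by simp
    have one: "1 \<le> lcost rc seg"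
    proof (rule H3_use[OF WV Wl _ segV segl segs])
      show "seg \<noteq> []" unfolding seg_def by simp
      show "dist (fst W) (fst (hd seg)) < r l" using dWh hdseg by simp
      show "2 * r l \<le> dist (fst W) (fst (last seg))" using nP lastseg unfolding P_def by simp
    qed
    have segd: "\<forall>p\<in>set seg. snd p = Suc l \<and> dist (fst W) (fst p) < 4 * r l"
    proof
      fix p assume p: "p \<in> set seg"
      have "dist (fst W) (fst p) < 4 * r l"
      proof (cases "p \<in> set pre")
        case True then show ?thesis using preP r_pos[of l] unfolding P_def by force
      next
        case False then have "p = hd rest" using p unfolding seg_def by simp
        then show ?thesis using d_hr by simp
      qed
      then show "snd p = Suc l \<and> dist (fst W) (fst p) < 4 * r l" using segl p by blast
    qed
    have cc: "ps W * lcost rc seg \<le> lcost hc seg" by (rule cross_cost[OF WV Wl segV segd])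
    have "ps W * 1 \<le> ps W * lcost rc seg" using one ps_nonneg[OF WV] by (rule mult_left_mono)
    then have psW: "ps W \<le> lcost hc seg" using cc by simp
    have lenlt: "length rest < length run" using split pne by simp
    obtain Q' where Q': "Q' \<noteq> []" "set Q' \<subseteq> V" "\<forall>q\<in>set Q'. snd q = l" "successively hadj Q'"
      "hd Q' = (par (fst (hd rest)) (Suc l), l)" "dist (fst (last Q')) (fst (last rest)) < 2 * r l"
      "lcost hc Q' \<le> lcost hc rest"
      using less.hyps[OF lenlt rne] setsub less.prems(2,3) sr(2) by blast
    define W' where "W' = hd Q'"
    have hrX: "fst (hd rest) \<in> Xs (Suc l)" using hdrest setsub less.prems(2,3) V_fst
      by blast
    have W'V: "W' \<in> V" unfolding W'_def using Q'(1,2) hd_in_set by blast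
    have dW'r: "dist (fst W') (fst (hd rest)) < r l"
      unfolding W'_def Q'(5) using par_dist[OF hrX] by (simp add: dist_commute)
    have dWW': "dist (fst W) (fst W') < lam * r l"
      using d_hr dW'r dist_triangle[of "fst W" "fst W'" "fst (hd rest)"] lam_ge[of 6 l] r_pos[of l]
        dist_commute[of "fst (hd rest)" "fst W'"] by linarith
    have "W = W' \<or> hadj W W'"
      apply (rule near_witness[OF WV W'V _ V_X[OF W'V]])
      using Wl Q' dWW' lam_r_pos[of l] unfolding W'_def by auto
    moreover have "W \<noteq> W'" using nP dW'r r_pos[of l] unfolding P_def by auto
    ultimately have hWW': "hadj W W'" by simp
    show ?thesis
    proof (intro exI[of _ "W # Q'"] conjI)
      show "set (W # Q') \<subseteq> V" using WV Q' by auto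
      show "\<forall>q\<in>set (W # Q'). snd q = l" using Wl Q' by auto
      show "successively hadj (W # Q')" using Q' hWW' unfolding W'_def by (simp add: successively_Cons)
      show "hd (W # Q') = (par (fst (hd run)) (Suc l), l)" unfolding W_def h_def by simp
      show "dist (fst (last (W # Q'))) (fst (last run)) < 2 * r l"
        using Q'(1,6) rne unfolding split by simp
      have "lcost hc (W # Q') = hc W W' + lcost hc Q'"
        using Q'(1) unfolding W'_def by (cases Q') auto
      also have "\<dots> \<le> ps W + lcost hc rest" using Q'(7) by simp
      also have "\<dots> \<le> lcost hc seg + lcost hc rest" using psW by simp
      also have "\<dots> = lcost hc run"
        unfolding split seg_def using rne lcost_append[of hc pre "hd rest" "tl rest"] by simp
      finally show "lcost hc (W # Q') \<le> lcost hc run" .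
    qed simp
  qed
qed


definition lift :: "nat \<Rightarrow> 'a \<times> nat \<Rightarrow> 'a \<times> nat" where
  "lift l v = (if snd v = Suc l then (par (fst v) (Suc l), l) else v)"

lemma E_hc: "successively (\<lambda>p q. snd p = snd q) xs \<Longrightarrow> lcost E xs = lcost hc xs"
  by (intro lcost_cong, erule successively_mono) (simp add: E_horiz)

lemma hadj_same: "successively hadj xs \<Longrightarrow> successively (\<lambda>p q. snd p = snd q) xs"
  by (erule successively_mono) (simp add: hadj_V)

lemma hadj_succ_adj: "successively hadj xs \<Longrightarrow> successively adj' xs"
  by (erule successively_mono) (simp add: hadj_adj)

lemma reduce:
  "\<gamma> \<noteq> [] \<Longrightarrow> set \<gamma> \<subseteq> V \<Longrightarrow> successively adj' \<gamma> \<Longrightarrow> \<forall>v\<in>set \<gamma>. snd v \<le> Suc l \<Longrightarrow>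
   \<exists>\<gamma>'. \<gamma>' \<noteq> [] \<and> set \<gamma>' \<subseteq> V \<and> successively adj' \<gamma>' \<and> (\<forall>v\<in>set \<gamma>'. snd v \<le> l) \<and>
     hd \<gamma>' = lift l (hd \<gamma>) \<and>
     (if snd (last \<gamma>) = Suc l then snd (last \<gamma>') = l \<and> dist (fst (last \<gamma>')) (fst (last \<gamma>)) < 2 * r l
      else last \<gamma>' = last \<gamma>) \<and>
     lcost E \<gamma>' \<le> lcost E \<gamma>"
proof (induction "length \<gamma>" arbitrary: \<gamma> rule: less_induct)
  case less
  define s where "s = hd \<gamma>"
  have sin: "s \<in> set \<gamma>" unfolding s_def using less.prems by simp
  show ?case
  proof (cases "snd s = Suc l")
    case False
    then have ls: "lift l s = s" unfolding lift_def by simp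
    have sl: "snd s \<le> l" using False sin less.prems(4) by fastforce
    show ?thesis
    proof (cases "tl \<gamma> = []")
      case True
      then have g: "\<gamma> = [s]" unfolding s_def using less.prems(1) by (cases \<gamma>) auto
      show ?thesis using g ls sl False less.prems(2) by (intro exI[of _ "[s]"]) auto
    next
      case tne: False
      obtain t rr where g: "\<gamma> = s # t # rr" unfolding s_def using less.prems(1) tne
        by (cases \<gamma>; cases "tl \<gamma>") auto
      have ast: "adj' s t" using less.prems(3) g by simp
      have tV: "t \<in> V" "s \<in> V" using less.prems(2) g by auto
      have tl': "snd t \<le> Suc l" using less.prems(4) g by auto
      obtain \<gamma>'' where G: "\<gamma>'' \<noteq> []" "set \<gamma>'' \<subseteq> V" "successively adj' \<gamma>''" "\<forall>v\<in>set \<gamma>''. snd v \<le> l"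
        "hd \<gamma>'' = lift l t"
        "if snd (last (t # rr)) = Suc l then snd (last \<gamma>'') = l \<and> dist (fst (last \<gamma>'')) (fst (last (t # rr))) < 2 * r l
         else last \<gamma>'' = last (t # rr)"
        "lcost E \<gamma>'' \<le> lcost E (t # rr)"
        using less.hyps[of "t # rr"] less.prems g by auto
      have lastg: "last \<gamma> = last (t # rr)" using g by simp
      have Est: "0 \<le> E s t" using E_nonneg tV by auto
      have cg: "lcost E \<gamma> = E s t + lcost E (t # rr)" using g by simp
      show ?thesis
      proof (cases "snd t = Suc l")
        case True
        have "s = (par (fst t) (Suc l), l)"
          using adj_cases[OF ast] True False tl' sl by auto
        then have h1: "hd \<gamma>'' = lift l (hd \<gamma>)" using G(5) True ls unfolding lift_def s_def by simp
        have c1: "lcost E \<gamma>'' \<le> lcost E \<gamma>" using G(7) Est cg by linarith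
        have G6: "if snd (last \<gamma>) = Suc l then snd (last \<gamma>'') = l \<and> dist (fst (last \<gamma>'')) (fst (last \<gamma>)) < 2 * r l
         else last \<gamma>'' = last \<gamma>" using G(6) unfolding lastg[symmetric] .
        show ?thesis using G(1-4) h1 c1 G6 by blast
      next
        case tF: False
        have ht: "hd \<gamma>'' = t" using G(5) tF unfolding lift_def by simp
        have sg: "successively adj' (s # \<gamma>'')" using G(1,3) ht ast by (simp add: successively_Cons)
        have "lcost E (s # \<gamma>'') = E s t + lcost E \<gamma>''" using G(1) ht by (cases \<gamma>'') auto
        then have c1: "lcost E (s # \<gamma>'') \<le> lcost E \<gamma>" using cg G(7) by linarith
        have G6: "if snd (last \<gamma>) = Suc l then snd (last \<gamma>'') = l \<and> dist (fst (last \<gamma>'')) (fst (last \<gamma>)) < 2 * r l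
         else last \<gamma>'' = last \<gamma>" using G(6) unfolding lastg[symmetric] .
        have l1: "last (s # \<gamma>'') = last \<gamma>''" using G(1) by simp
        have h1: "hd (s # \<gamma>'') = lift l (hd \<gamma>)" using ls unfolding s_def by simp
        have s2: "s # \<gamma>'' \<noteq> []" "set (s # \<gamma>'') \<subseteq> V" "\<forall>v\<in>set (s # \<gamma>''). snd v \<le> l"
          using G(2,4) tV sl by auto
        show ?thesis
        proof (intro exI[of _ "s # \<gamma>''"] conjI)
          show "if snd (last \<gamma>) = Suc l then snd (last (s # \<gamma>'')) = l \<and> dist (fst (last (s # \<gamma>''))) (fst (last \<gamma>)) < 2 * r l
            else last (s # \<gamma>'') = last \<gamma>" unfolding l1 by (rule G6)
        qed (use s2 sg h1 c1 in auto)
      qed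
    qed
  next
    case True
    define P where "P = (\<lambda>v::'a \<times> nat. snd v = Suc l)"
    define run where "run = takeWhile P \<gamma>"
    define rest where "rest = dropWhile P \<gamma>"
    have split: "\<gamma> = run @ rest" unfolding run_def rest_def by simp
    have rne: "run \<noteq> []" unfolding run_def using True less.prems(1) s_def P_def
      by (simp add: takeWhile_eq_Nil_iff)
    have runP: "\<forall>v\<in>set run. snd v = Suc l" unfolding run_def P_def by (auto dest: set_takeWhileD)
    have runV: "set run \<subseteq> V" "set rest \<subseteq> V" using less.prems(2) split by auto
    have sa: "successively adj' run" "successively adj' rest"
      "rest \<noteq> [] \<Longrightarrow> adj' (last run) (hd rest)"
      using less.prems(3) rne unfolding split successively_append_iff by auto
    have runH: "successively hadj run"
    proof (rule successively_mono[OF sa(1)])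
      fix x y assume "x \<in> set run" "y \<in> set run" "adj' x y"
      then show "hadj x y" using runP adj_cases[of x y] by auto
    qed
    obtain Q where Q: "Q \<noteq> []" "set Q \<subseteq> V" "\<forall>q\<in>set Q. snd q = l" "successively hadj Q"
       "hd Q = (par (fst (hd run)) (Suc l), l)" "dist (fst (last Q)) (fst (last run)) < 2 * r l"
       "lcost hc Q \<le> lcost hc run"
      using cross_decomp[OF rne runV(1) runP runH] by blast
    have hdrun: "hd run = s" unfolding s_def split using rne by simp
    have hdQ: "hd Q = lift l (hd \<gamma>)" using Q(5) True hdrun unfolding lift_def s_def by simp
    have cQ: "lcost E Q = lcost hc Q" using E_hc hadj_same Q(4) by blast
    have cR: "lcost E run = lcost hc run" using E_hc hadj_same runH by blast
    have QA: "successively adj' Q" using hadj_succ_adj Q(4) by blast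
    have Ql: "\<forall>v\<in>set Q. snd v \<le> l" using Q(3) by simp
    have lastrun: "last run \<in> set run" using rne by simp
    show ?thesis
    proof (cases "rest = []")
      case True
      then have "\<gamma> = run" using split by simp
      then have "snd (last \<gamma>) = Suc l" using runP lastrun by simp
      moreover have "snd (last Q) = l" using Q(1,3) by simp
      ultimately show ?thesis using Q hdQ cQ cR QA Ql \<open>\<gamma> = run\<close> by (intro exI[of _ Q]) auto
    next
      case rne2: False
      define R where "R = hd rest"
      define L where "L = last run"
      have Rin: "R \<in> set rest" unfolding R_def using rne2 by simp
      have RnP: "snd R \<noteq> Suc l" unfolding R_def rest_def P_def using rne2 hd_dropWhile rest_def P_def
        by metis
      have Rle: "snd R \<le> Suc l" using Rin split less.prems(4) by auto
      have aLR: "adj' L R" using sa(3) rne2 unfolding L_def R_def by simp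
      have Ll: "snd L = Suc l" unfolding L_def using runP lastrun by simp
      have LV: "L \<in> V" unfolding L_def using lastrun runV by auto
      have RV: "R \<in> V" using Rin runV by auto
      have Req: "R = (par (fst L) (Suc l), l)" using adj_cases[OF aLR] Ll RnP Rle by auto
      have LX: "fst L \<in> Xs (Suc l)" using LV Ll V_fst by blast
      have lenlt: "length rest < length \<gamma>" using split rne by simp
      obtain \<gamma>'' where G: "\<gamma>'' \<noteq> []" "set \<gamma>'' \<subseteq> V" "successively adj' \<gamma>''" "\<forall>v\<in>set \<gamma>''. snd v \<le> l"
        "hd \<gamma>'' = lift l R"
        "if snd (last rest) = Suc l then snd (last \<gamma>'') = l \<and> dist (fst (last \<gamma>'')) (fst (last rest)) < 2 * r l
         else last \<gamma>'' = last rest"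
        "lcost E \<gamma>'' \<le> lcost E rest"
        using less.hyps[OF lenlt rne2 runV(2) sa(2)] less.prems(4) split unfolding R_def by auto
      have hdG: "hd \<gamma>'' = R" using G(5) RnP unfolding lift_def by simp
      have lastg: "last \<gamma> = last rest" using split rne2 by simp
      have ELR: "E L R = K0 / \<eta>m * ps L"
        using E_up[of "fst L" l] Ll Req by (cases L) auto
      have vc: "pw R \<le> E L R" using vert_cost[OF LX] ELR Req Ll by (cases L) auto
      have psR: "ps R \<le> E L R" using star_le[OF RV, of pw] vc by simp
      have cg: "lcost E \<gamma> = lcost E run + E L R + lcost E rest"
        using lcost_join[OF rne rne2, of E] split unfolding L_def R_def by simp
      have lQV: "last Q \<in> V" "snd (last Q) = l" using Q(1,2,3) by auto
      have dLR: "dist (fst L) (fst R) < r l" using par_dist[OF LX] Req by simp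
      have dQR: "dist (fst (last Q)) (fst R) < lam * r l"
        using Q(6) dLR dist_triangle[of "fst (last Q)" "fst R" "fst L"] lam_ge[of 3 l] r_pos[of l]
        unfolding L_def by linarith
      have QRc: "last Q = R \<or> hadj (last Q) R"
        apply (rule near_witness[OF lQV(1) RV _ V_X[OF RV]])
        using lQV(2) Req dQR lam_r_pos[of l] by auto
      show ?thesis
      proof (cases "last Q = R")
        case True
        define T where "T = tl \<gamma>''"
        have gT: "\<gamma>'' = R # T" unfolding T_def using G(1) hdG by (cases \<gamma>'') auto
        have s1: "successively adj' (Q @ T)"
          using QA G(3) gT True unfolding successively_append_iff by (auto simp: successively_Cons)
        have c1: "lcost E (Q @ T) = lcost E Q + lcost E \<gamma>''"
          using lcost_glue[OF Q(1), of E T] True gT by simp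
        have l1: "last (Q @ T) = last \<gamma>''" using gT True Q(1) by (cases "T = []") auto
        have E0: "0 \<le> E L R" using E_nonneg[OF LV RV] .
        show ?thesis
        proof (intro exI[of _ "Q @ T"] conjI)
          show "Q @ T \<noteq> []" using Q(1) by simp
          show "set (Q @ T) \<subseteq> V" using Q(2) G(2) gT by auto
          show "\<forall>v\<in>set (Q @ T). snd v \<le> l" using Ql G(4) gT by auto
          show "hd (Q @ T) = lift l (hd \<gamma>)" using hdQ Q(1) by simp
          show "lcost E (Q @ T) \<le> lcost E \<gamma>" using c1 cg cQ cR Q(7) G(7) E0 by linarith
          show "if snd (last \<gamma>) = Suc l then snd (last (Q @ T)) = l \<and> dist (fst (last (Q @ T))) (fst (last \<gamma>)) < 2 * r l
            else last (Q @ T) = last \<gamma>" using G(6) l1 lastg by simp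
        qed (rule s1)
      next
        case False
        then have hQR: "hadj (last Q) R" using QRc by simp
        have s1: "successively adj' (Q @ \<gamma>'')"
          using QA G(3) hQR hdG Q(1) G(1) hadj_adj unfolding successively_append_iff by auto
        have c1: "lcost E (Q @ \<gamma>'') = lcost E Q + E (last Q) R + lcost E \<gamma>''"
          using lcost_join[OF Q(1) G(1), of E] hdG by simp
        have "E (last Q) R = min (ps (last Q)) (ps R)" using E_horiz hadj_V[OF hQR] by simp
        then have eq: "E (last Q) R \<le> E L R" using psR by simp
        show ?thesis
        proof (intro exI[of _ "Q @ \<gamma>''"] conjI)
          show "Q @ \<gamma>'' \<noteq> []" using Q(1) by simp
          show "set (Q @ \<gamma>'') \<subseteq> V" using Q(2) G(2) by auto
          show "\<forall>v\<in>set (Q @ \<gamma>''). snd v \<le> l" using Ql G(4) by auto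
          show "hd (Q @ \<gamma>'') = lift l (hd \<gamma>)" using hdQ Q(1) by simp
          show "lcost E (Q @ \<gamma>'') \<le> lcost E \<gamma>" using c1 cg cQ cR Q(7) G(7) eq by linarith
          show "if snd (last \<gamma>) = Suc l then snd (last (Q @ \<gamma>'')) = l \<and> dist (fst (last (Q @ \<gamma>''))) (fst (last \<gamma>)) < 2 * r l
            else last (Q @ \<gamma>'') = last \<gamma>" using G(6) G(1) lastg by simp
        qed (rule s1)
      qed
    qed
  qed
qed


definition good :: "nat \<Rightarrow> 'a \<Rightarrow> 'a \<Rightarrow> ('a \<times> nat) list \<Rightarrow> bool" where
  "good m x y \<gamma> \<longleftrightarrow> \<gamma> \<noteq> [] \<and> set \<gamma> \<subseteq> V \<and> successively adj' \<gamma> \<and> m \<le> snd (hd \<gamma>) \<and> m \<le> snd (last \<gamma>) \<and>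
     dist x (fst (hd \<gamma>)) < 2 * r (snd (hd \<gamma>)) \<and> dist y (fst (last \<gamma>)) < 3 * r (snd (last \<gamma>))"

lemma reduce_step:
  assumes g: "good m x y \<gamma>" and lv: "\<forall>v\<in>set \<gamma>. snd v \<le> Suc l" and ml: "m \<le> l"
  shows "\<exists>\<gamma>'. good m x y \<gamma>' \<and> (\<forall>v\<in>set \<gamma>'. snd v \<le> l) \<and> lcost E \<gamma>' \<le> lcost E \<gamma>"
proof -
  have g1: "\<gamma> \<noteq> []" "set \<gamma> \<subseteq> V" "successively adj' \<gamma>" "m \<le> snd (hd \<gamma>)" "m \<le> snd (last \<gamma>)"
     "dist x (fst (hd \<gamma>)) < 2 * r (snd (hd \<gamma>))" "dist y (fst (last \<gamma>)) < 3 * r (snd (last \<gamma>))"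
    using g unfolding good_def by auto
  obtain \<gamma>' where G: "\<gamma>' \<noteq> []" "set \<gamma>' \<subseteq> V" "successively adj' \<gamma>'" "\<forall>v\<in>set \<gamma>'. snd v \<le> l"
     "hd \<gamma>' = lift l (hd \<gamma>)"
     "if snd (last \<gamma>) = Suc l then snd (last \<gamma>') = l \<and> dist (fst (last \<gamma>')) (fst (last \<gamma>)) < 2 * r l
      else last \<gamma>' = last \<gamma>"
     "lcost E \<gamma>' \<le> lcost E \<gamma>"
    using reduce[OF g1(1-3) lv] by blast
  have rl: "r (Suc l) \<le> r l / 6" by (rule r_Suc_le)
  have hd1: "m \<le> snd (hd \<gamma>') \<and> dist x (fst (hd \<gamma>')) < 2 * r (snd (hd \<gamma>'))"
  proof (cases "snd (hd \<gamma>) = Suc l")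
    case True
    have hX: "fst (hd \<gamma>) \<in> Xs (Suc l)" using True g1(1,2) V_fst hd_in_set by blast
    have e: "hd \<gamma>' = (par (fst (hd \<gamma>)) (Suc l), l)" using G(5) True unfolding lift_def by simp
    have "dist x (fst (hd \<gamma>')) \<le> dist x (fst (hd \<gamma>)) + dist (fst (hd \<gamma>)) (fst (hd \<gamma>'))"
      by (rule dist_triangle)
    also have "\<dots> < 2 * r (Suc l) + r l" using g1(6) True par_dist[OF hX] e by simp
    also have "\<dots> \<le> 2 * r l" using rl r_pos[of l] by linarith
    finally show ?thesis using e ml by simp
  next
    case False
    then show ?thesis using G(5) g1(4,6) unfolding lift_def by simp
  qed
  have last1: "m \<le> snd (last \<gamma>') \<and> dist y (fst (last \<gamma>')) < 3 * r (snd (last \<gamma>'))"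
  proof (cases "snd (last \<gamma>) = Suc l")
    case True
    then have e: "snd (last \<gamma>') = l" "dist (fst (last \<gamma>')) (fst (last \<gamma>)) < 2 * r l" using G(6) by auto
    have "dist y (fst (last \<gamma>')) \<le> dist y (fst (last \<gamma>)) + dist (fst (last \<gamma>)) (fst (last \<gamma>'))"
      by (rule dist_triangle)
    also have "\<dots> < 3 * r (Suc l) + 2 * r l" using g1(7) True e by (simp add: dist_commute)
    also have "\<dots> \<le> 3 * r l" using rl r_pos[of l] by linarith
    finally show ?thesis using e ml by simp
  next
    case False
    then show ?thesis using G(6) g1(5,7) by simp
  qed
  show ?thesis using G hd1 last1 unfolding good_def by blast
qed

lemma reduce_all:
  "good m x y \<gamma> \<Longrightarrow> \<forall>v\<in>set \<gamma>. snd v \<le> m + d \<Longrightarrow>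
   \<exists>\<gamma>'. good m x y \<gamma>' \<and> (\<forall>v\<in>set \<gamma>'. snd v \<le> m) \<and> lcost E \<gamma>' \<le> lcost E \<gamma>"
proof (induction d arbitrary: \<gamma>)
  case 0 then show ?case by auto
next
  case (Suc d)
  obtain \<gamma>1 where g1: "good m x y \<gamma>1" "\<forall>v\<in>set \<gamma>1. snd v \<le> m + d" "lcost E \<gamma>1 \<le> lcost E \<gamma>"
    using reduce_step[OF Suc.prems(1), of "m + d"] Suc.prems(2) by auto
  obtain \<gamma>2 where "good m x y \<gamma>2" "\<forall>v\<in>set \<gamma>2. snd v \<le> m" "lcost E \<gamma>2 \<le> lcost E \<gamma>1"
    using Suc.IH[OF g1(1,2)] by blast
  then show ?case using g1(3) by (intro exI[of _ \<gamma>2]) auto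
qed

lemma final_bound:
  assumes g: "good (Suc j) x y \<gamma>" and lv: "\<forall>v\<in>set \<gamma>. snd v \<le> Suc j"
    and dxy: "6 * r j \<le> dist x y"
  shows "ps (par (fst (hd \<gamma>)) (Suc j), j) \<le> lcost E \<gamma>"
proof -
  define m where "m = Suc j"
  have g1: "\<gamma> \<noteq> []" "set \<gamma> \<subseteq> V" "successively adj' \<gamma>" "m \<le> snd (hd \<gamma>)" "m \<le> snd (last \<gamma>)"
     "dist x (fst (hd \<gamma>)) < 2 * r (snd (hd \<gamma>))" "dist y (fst (last \<gamma>)) < 3 * r (snd (last \<gamma>))"
    using g unfolding good_def m_def by auto
  have hm: "snd (hd \<gamma>) = m" using g1(1,4) lv hd_in_set unfolding m_def by fastforce
  have lm: "snd (last \<gamma>) = m" using g1(1,5) lv last_in_set unfolding m_def by fastforce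
  define h where "h = hd \<gamma>"
  define W where "W = (par (fst h) (Suc j), j)"
  have hX: "fst h \<in> Xs (Suc j)" using hm g1(1,2) V_fst hd_in_set unfolding h_def m_def by blast
  have WV: "W \<in> V" unfolding W_def using par_in[OF hX] by simp
  have Wl: "snd W = j" unfolding W_def by simp
  have dWh: "dist (fst W) (fst h) < r j" unfolding W_def using par_dist[OF hX] by (simp add: dist_commute)
  have rm: "r m \<le> r j / 6" unfolding m_def by (rule r_Suc_le)
  have rj: "0 < r j" by (rule r_pos)
  have dxW: "dist x (fst W) < 2 * r m + r j"
    using g1(6) hm dWh dist_triangle[of x "fst W" "fst h"] unfolding h_def
    by (simp add: dist_commute)
  define P where "P = (\<lambda>v::'a \<times> nat. snd v = m \<and> dist (fst W) (fst v) < 2 * r j)"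
  have nPl: "\<not> P (last \<gamma>)"
  proof
    assume "P (last \<gamma>)"
    then have "dist (fst W) (fst (last \<gamma>)) < 2 * r j" unfolding P_def by simp
    moreover have "dist x y \<le> dist x (fst W) + dist (fst W) (fst (last \<gamma>)) + dist y (fst (last \<gamma>))"
      using dist_triangle[of x y "fst W"] dist_triangle[of "fst W" y "fst (last \<gamma>)"]
      by (simp add: dist_commute)
    moreover have "dist y (fst (last \<gamma>)) < 3 * r m" using g1(7) lm by simp
    ultimately show False using dxW rm rj dxy by linarith
  qed
  have Ph: "P h" unfolding P_def using hm dWh rj unfolding h_def by simp
  define pre where "pre = takeWhile P \<gamma>"
  define rest where "rest = dropWhile P \<gamma>"
  have split: "\<gamma> = pre @ rest" unfolding pre_def rest_def by simp
  have rne: "rest \<noteq> []"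
  proof
    assume "rest = []"
    then have "\<gamma> = pre" using split by simp
    then have "\<forall>v\<in>set \<gamma>. P v" unfolding pre_def by (metis set_takeWhileD)
    then show False using nPl g1(1) by simp
  qed
  have pne: "pre \<noteq> []" unfolding pre_def using Ph g1(1) unfolding h_def
    by (simp add: takeWhile_eq_Nil_iff)
  have preP: "\<forall>v\<in>set pre. P v" unfolding pre_def by (auto dest: set_takeWhileD)
  define T where "T = hd rest"
  define L where "L = last pre"
  have nPT: "\<not> P T" unfolding T_def rest_def using rne hd_dropWhile rest_def by metis
  have Lin: "L \<in> set pre" unfolding L_def using pne by simp
  have Tin: "T \<in> set rest" unfolding T_def using rne by simp
  have PL: "P L" using preP Lin by blast
  have LV: "L \<in> V" using Lin split g1(2) by auto
  have TV: "T \<in> V" using Tin split g1(2) by auto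
  have Tl: "snd T \<le> m" using Tin split lv unfolding m_def by auto
  have sa: "successively adj' pre" "adj' L T"
    using g1(3) pne rne unfolding split successively_append_iff L_def T_def by auto
  have cg: "lcost E \<gamma> = lcost E pre + E L T + lcost E rest"
    using lcost_join[OF pne rne, of E] split unfolding L_def T_def by simp
  have c0: "0 \<le> lcost E rest" "0 \<le> lcost E pre"
    using E_cost_nonneg split g1(2) by auto
  have Ll: "snd L = m" using PL unfolding P_def by simp
  have dWL: "dist (fst W) (fst L) < 2 * r j" using PL unfolding P_def by simp
  have psW0: "0 \<le> ps W" using ps_nonneg[OF WV] .
  show ?thesis
  proof (cases "snd T = m")
    case True
    have hLT: "hadj L T" using adj_cases[OF sa(2)] True Ll by auto
    have preH: "successively hadj pre"
    proof (rule successively_mono[OF sa(1)])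
      fix u w assume "u \<in> set pre" "w \<in> set pre" "adj' u w"
      then show "hadj u w" using preP adj_cases[of u w] unfolding P_def by auto
    qed
    define seg where "seg = pre @ [T]"
    have segV: "set seg \<subseteq> V" unfolding seg_def using split g1(2) TV by auto
    have segl: "\<forall>p\<in>set seg. snd p = Suc j" unfolding seg_def using preP True unfolding P_def m_def by auto
    have segs: "successively hadj seg" unfolding seg_def using preH hLT pne
      unfolding successively_append_iff L_def by auto
    have hdseg: "hd seg = h" unfolding seg_def h_def split using pne by simp
    have dT: "2 * r j \<le> dist (fst W) (fst T)" using nPT True unfolding P_def by simp
    have one: "1 \<le> lcost rc seg"
    proof (rule H3_use[OF WV Wl _ segV segl segs])
      show "seg \<noteq> []" unfolding seg_def by simp
      show "dist (fst W) (fst (hd seg)) < r j" using dWh hdseg by simp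
      show "2 * r j \<le> dist (fst W) (fst (last seg))" using dT unfolding seg_def by simp
    qed
    have dLT: "dist (fst L) (fst T) < 2 * r j" using hadj_dist'[OF hLT] Ll unfolding m_def by simp
    have segd: "\<forall>p\<in>set seg. snd p = Suc j \<and> dist (fst W) (fst p) < 4 * r j"
    proof
      fix p assume p: "p \<in> set seg"
      have "dist (fst W) (fst p) < 4 * r j"
      proof (cases "p \<in> set pre")
        case True then show ?thesis using preP rj unfolding P_def by force
      next
        case False then have "p = T" using p unfolding seg_def by simp
        have "dist (fst W) (fst T) < 4 * r j" using dWL dLT dist_triangle[of "fst W" "fst T" "fst L"] by linarith
        then show ?thesis using \<open>p = T\<close> by simp
      qed
      then show "snd p = Suc j \<and> dist (fst W) (fst p) < 4 * r j" using segl p by blast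
    qed
    have cc: "ps W * lcost rc seg \<le> lcost hc seg" by (rule cross_cost[OF WV Wl segV segd])
    have "ps W * 1 \<le> ps W * lcost rc seg" using one psW0 by (rule mult_left_mono)
    then have psW: "ps W \<le> lcost hc seg" using cc by simp
    have "lcost E seg = lcost hc seg" using E_hc hadj_same segs by blast
    moreover have "lcost E seg = lcost E pre + E L T" unfolding seg_def using lcost_snoc[OF pne] L_def by simp
    ultimately show ?thesis using psW cg c0 unfolding W_def h_def by linarith
  next
    case False
    have LX: "fst L \<in> Xs (Suc j)" using LV Ll V_fst unfolding m_def by blast
    have Teq: "T = (par (fst L) (Suc j), j)" using adj_cases[OF sa(2)] False Ll Tl unfolding m_def by auto
    have ELT: "E L T = K0 / \<eta>m * ps L" using E_up[of "fst L" j] Ll Teq unfolding m_def by (cases L) auto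
    have vc: "pw T \<le> E L T" using vert_cost[OF LX] ELT Teq Ll unfolding m_def by (cases L) auto
    have dLT: "dist (fst L) (fst T) < r j" using par_dist[OF LX] Teq by simp
    have dWT: "dist (fst W) (fst T) < lam * r j"
      using dWL dLT dist_triangle[of "fst W" "fst T" "fst L"] lam_ge[of 3 j] by linarith
    have "T \<in> N W"
      apply (rule near_witness_N[OF WV TV _ V_X[OF TV]])
      using Wl Teq dWT lam_r_pos[of j] by auto
    then have "ps W \<le> pw T" by (rule star_le_N)
    then show ?thesis using vc cg c0 unfolding W_def h_def by linarith
  qed
qed


lemma r_mono: "B \<le> k \<Longrightarrow> r k \<le> r B"
  unfolding r_eq using a6 by (intro le_imp_inverse_le power_increasing) auto

lemma r_small: "0 < e \<Longrightarrow> \<exists>B. r B < e"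
proof -
  assume e: "0 < e"
  obtain B where "1 / e < a ^ B" using real_arch_pow[of a "1/e"] a6 by auto
  then have "inverse (a ^ B) < e" using e a_pos
    by (simp add: field_simps)
  then show ?thesis unfolding r_eq by blast
qed

lemma pic_bound:
  assumes x: "x \<in> X" and h: "h \<in> V" "snd h = Suc (Suc (Suc n))"
    and dh: "dist x (fst h) < 2 * r (Suc (Suc (Suc n)))"
    and c: "c \<in> V" "snd c = n" and dc: "dist (fst c) x < 2 * r n"
  shows "\<eta>m^2 * pw c / K0^2 \<le> ps (par (fst h) (Suc (Suc (Suc n))), Suc (Suc n))"
proof -
  define w where "w = par (fst h) (Suc (Suc (Suc n)))"
  define w1 where "w1 = par w (Suc (Suc n))"
  define w0 where "w0 = par w1 (Suc n)"
  have hX: "fst h \<in> Xs (Suc (Suc (Suc n)))" using h V_fst by blast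
  have wX: "w \<in> Xs (Suc (Suc n))" unfolding w_def using par_in[OF hX] .
  have w1X: "w1 \<in> Xs (Suc n)" unfolding w1_def using par_in[OF wX] .
  have w0X: "w0 \<in> Xs n" unfolding w0_def using par_in[OF w1X] .
  have d1: "dist (fst h) w < r (Suc (Suc n))" unfolding w_def using par_dist[OF hX] .
  have d2: "dist w w1 < r (Suc n)" unfolding w1_def using par_dist[OF wX] .
  have d3: "dist w1 w0 < r n" unfolding w0_def using par_dist[OF w1X] .
  have q1: "r (Suc (Suc (Suc n))) \<le> r (Suc (Suc n)) / 6" by (rule r_Suc_le)
  have q2: "r (Suc (Suc n)) \<le> r (Suc n) / 6" by (rule r_Suc_le)
  have q3: "r (Suc n) \<le> r n / 6" by (rule r_Suc_le)
  have rn: "0 < r n" by (rule r_pos)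
  have "dist x w0 \<le> dist x (fst h) + dist (fst h) w + dist w w1 + dist w1 w0"
    using dist_triangle[of x w0 "fst h"] dist_triangle[of "fst h" w0 w] dist_triangle[of w w0 w1]
    by linarith
  then have dxw0: "dist x w0 < 2 * r n" using dh d1 d2 d3 q1 q2 q3 rn by linarith
  have dcw0: "dist (fst c) w0 < lam * r n"
    using dc dxw0 dist_triangle[of "fst c" w0 x] lam_ge[of 4 n] by linarith
  define A where "A = (w0, n)"
  have AV: "A \<in> V" unfolding A_def using w0X by simp
  have w0XX: "w0 \<in> X" using w0X Xs_sub by auto
  have "c = A \<or> hadj c A"
    apply (rule near_witness[OF c(1) AV _ w0XX])
    using c(2) dcw0 lam_r_pos[of n] unfolding A_def by auto
  then have pcA: "pw c \<le> K0 * pw A"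
  proof
    assume "c = A" then show ?thesis using pw_pos'[OF AV] H2(1) by simp
  next
    assume "hadj c A" then show ?thesis using H2(2) by blast
  qed
  define W where "W = (w, Suc (Suc n))"
  have WV: "W \<in> V" unfolding W_def using wX by simp
  have W1V: "(w1, Suc n) \<in> V" using w1X by simp
  have pwW: "pw W = \<rho> W * (\<rho> (w1, Suc n) * pw A)"
    unfolding W_def A_def w0_def w1_def by simp
  have r1: "\<eta>m \<le> \<rho> W" "\<eta>m \<le> \<rho> (w1, Suc n)" using rho_lb WV W1V by auto
  have pA: "0 < pw A" using pw_pos'[OF AV] .
  have "\<eta>m^2 * pw A \<le> pw W"
    unfolding pwW power2_eq_square using r1 pA H1(1)
    by (simp add: mult.assoc mult_mono)
  have "\<eta>m^2 * pw c / K0^2 \<le> \<eta>m^2 * (K0 * pw A) / K0^2"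
    using pcA H1(1) H2(1) by (intro divide_right_mono mult_left_mono) auto
  also have "\<dots> = \<eta>m^2 * pw A / K0" using H2(1) by (simp add: power2_eq_square field_simps)
  also have "\<dots> \<le> pw W / K0" using \<open>\<eta>m^2 * pw A \<le> pw W\<close> H2(1) by (intro divide_right_mono) auto
  also have "\<dots> \<le> ps W" by (rule ps_K0[OF WV])
  finally show ?thesis unfolding W_def w_def .
qed

end
theorem lemma3p20:
  fixes X :: "'a::metric_space set" and a lam :: real and x0 :: 'a
    and Xs :: "nat \<Rightarrow> 'a set" and par :: "'a \<Rightarrow> nat \<Rightarrow> 'a"
    and \<rho> :: "'a \<times> nat \<Rightarrow> real" and \<eta>m \<eta>p K0 :: real
  assumes "compact X" and "doubling X" and "diameter X = 1/2"
    and "hyperbolic_filling X a lam x0 Xs par"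
    and "a \<ge> lam" and "lam \<ge> 6"
    and rho_pos: "\<forall>v\<in>vertices Xs. \<rho> v > 0"
    and H1: "0 < \<eta>m" "\<eta>m \<le> \<eta>p" "\<eta>p < 1" "\<forall>v\<in>vertices Xs. \<eta>m \<le> \<rho> v \<and> \<rho> v \<le> \<eta>p"
    and H2: "K0 \<ge> 1" "\<forall>u w. horiz_adj X a lam Xs u w \<longrightarrow> piw \<rho> par u \<le> K0 * piw \<rho> par w"
    and H3': "\<forall>k. \<forall>w\<in>level Xs k. \<forall>\<gamma>\<in>Gamma X a lam Xs k w. L_h \<rho> X a lam Xs par \<gamma> \<ge> 1"
  shows "\<exists>K2\<ge>1. \<forall>x\<in>X. \<forall>y\<in>X. x \<noteq> y \<longrightarrow>
           (\<exists>k0. \<forall>k\<ge>k0. \<forall>u\<in>level Xs k. \<forall>v\<in>level Xs k.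
              x \<in> Bv X a u \<and> y \<in> Bv X a v \<longrightarrow>
              (\<forall>\<gamma>. is_path X a lam Xs par \<gamma> \<and> hd \<gamma> = u \<and> last \<gamma> = v \<longrightarrow>
                 path_len \<rho> K0 \<eta>m X a lam Xs par \<gamma> \<ge> pi_c \<rho> par X a Xs x y / K2))"
proof -
  interpret HF X a lam x0 Xs par \<rho> \<eta>m \<eta>p K0
    apply unfold_locales using assms by auto
  define K2 where "K2 = K0^2 / \<eta>m^2"
  have em1: "\<eta>m^2 \<le> K0^2" using H1 H2(1) by (intro power_mono) auto
  have em0: "0 < \<eta>m^2" using H1(1) by simp
  have K2: "K2 \<ge> 1" unfolding K2_def using em1 em0 by (simp add: le_divide_eq)
  have bX: "bounded X" using assms(1) by (rule compact_imp_bounded)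
  show ?thesis
  proof (intro exI[of _ K2] conjI K2 ballI impI)
    fix x y assume xX: "x \<in> X" and yX: "y \<in> X" and xy: "x \<noteq> y"
    define Pn where "Pn = (\<lambda>n. \<exists>z\<in>Xs n. {x, y} \<subseteq> Xball X z (2 * a powi (- int n)))"
    have P0: "Pn 0"
    proof -
      have "dist x0 x \<le> diameter X" "dist x0 y \<le> diameter X"
        using diameter_bounded_bound[OF bX] hfD(2) xX yX by auto
      then show ?thesis unfolding Pn_def Xball_def using hfD(1) xX yX assms(3) by auto
    qed
    have Pd: "dist x y < 4 * r k" if Pk: "Pn k" for k
    proof -
      obtain z where "{x, y} \<subseteq> Xball X z (2 * r k)"
        using Pk unfolding Pn_def by blast
      then have "dist z x < 2 * r k" "dist z y < 2 * r k" unfolding Xball_def by auto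
      then show ?thesis using dist_triangle3[of x y z] by linarith
    qed
    have dpos: "0 < dist x y / 4" using xy by simp
    obtain B where B: "r B < dist x y / 4" using r_small[OF dpos] by blast
    have Pb: "k \<le> B" if "Pn k" for k
    proof (rule ccontr)
      assume "\<not> k \<le> B"
      then have "r k \<le> r B" by (intro r_mono) auto
      then show False using Pd[OF that] B by linarith
    qed
    define n where "n = c_level X a Xs x y"
    have n_eq: "n = Greatest Pn" unfolding n_def c_level_def Pn_def ..
    have Pn: "Pn n" unfolding n_eq using GreatestI_nat[of Pn 0 B] P0 Pb by blast
    have nS: "\<not> Pn (Suc n)"
    proof
      assume "Pn (Suc n)"
      then have "Suc n \<le> Greatest Pn" using Greatest_le_nat[of Pn "Suc n" B] Pb by blast
      then show False unfolding n_eq[symmetric] by simp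
    qed
    have dxy: "r (Suc n) < dist x y"
    proof -
      obtain z where z: "z \<in> Xs (Suc n)" "dist x z < r (Suc n)" using cover[OF xX] by blast
      have "x \<in> Xball X z (2 * r (Suc n))" unfolding Xball_def using z xX r_pos[of "Suc n"]
        by (simp add: dist_commute)
      then have "y \<notin> Xball X z (2 * r (Suc n))" using nS z(1) unfolding Pn_def by blast
      then have "2 * r (Suc n) \<le> dist z y" unfolding Xball_def using yX by simp
      then show ?thesis using z(2) dist_triangle[of z y x] by (simp add: dist_commute)
    qed
    define j where "j = Suc (Suc n)"
    have e: "r j = r (Suc n) / a" unfolding j_def by (rule r_Suc)
    have "r (Suc n) = a * r j" using e a_pos by (simp add: field_simps)
    moreover have "6 * r j \<le> a * r j" using a6 r_pos[of j] by (intro mult_right_mono) auto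
    ultimately have dj: "6 * r j \<le> dist x y" using dxy by linarith
    obtain c where cin: "c \<in> c_set X a Xs x y" and pic: "pi_c \<rho> par X a Xs x y = pw c"
    proof -
      have cs: "c_set X a Xs x y = {(z, n) | z. z \<in> Xs n \<and> {x, y} \<subseteq> Xball X z (2 * a powi (- int n))}"
        unfolding c_set_def Let_def n_def ..
      have fin: "finite (c_set X a Xs x y)"
      proof (rule finite_subset[of _ "(\<lambda>z. (z, n)) ` Xs n"])
        show "c_set X a Xs x y \<subseteq> (\<lambda>z. (z, n)) ` Xs n" unfolding cs by auto
      qed (use finite_Xs in auto)
      have ne: "c_set X a Xs x y \<noteq> {}" using Pn unfolding cs Pn_def by auto
      have "Max (pw ` c_set X a Xs x y) \<in> pw ` c_set X a Xs x y"
        using fin ne by (intro Max_in) auto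
      then show ?thesis using that unfolding pi_c_def by auto
    qed
    have cprops: "c \<in> V" "snd c = n" "dist (fst c) x < 2 * r n"
    proof -
      have cs: "c_set X a Xs x y = {(z, n) | z. z \<in> Xs n \<and> {x, y} \<subseteq> Xball X z (2 * a powi (- int n))}"
        unfolding c_set_def Let_def n_def ..
      obtain z where "c = (z, n)" "z \<in> Xs n" "{x, y} \<subseteq> Xball X z (2 * a powi (- int n))"
        using cin unfolding cs by blast
      then show "c \<in> V" "snd c = n" "dist (fst c) x < 2 * r n" unfolding Xball_def by auto
    qed
    show "\<exists>k0. \<forall>k\<ge>k0. \<forall>u\<in>level Xs k. \<forall>v\<in>level Xs k.
              x \<in> Bv X a u \<and> y \<in> Bv X a v \<longrightarrow>
              (\<forall>\<gamma>. is_path X a lam Xs par \<gamma> \<and> hd \<gamma> = u \<and> last \<gamma> = v \<longrightarrow>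
                 path_len \<rho> K0 \<eta>m X a lam Xs par \<gamma> \<ge> pi_c \<rho> par X a Xs x y / K2)"
    proof (intro exI[of _ "Suc j"] allI impI ballI)
      fix k u v \<gamma>
      assume k: "Suc j \<le> k" and u: "u \<in> level Xs k" and v: "v \<in> level Xs k"
        and B: "x \<in> Bv X a u \<and> y \<in> Bv X a v"
        and P: "is_path X a lam Xs par \<gamma> \<and> hd \<gamma> = u \<and> last \<gamma> = v"
      have uk: "snd u = k" "snd v = k" using u v unfolding level_def by auto
      have dxu: "dist x (fst u) < r k" "dist y (fst v) < r k"
        using B uk unfolding Bv_def Xball_def by (auto simp: dist_commute)
      have gp: "\<gamma> \<noteq> []" "set \<gamma> \<subseteq> V" "successively adj' \<gamma>"
        using P unfolding is_path_def successively_conv_nth by auto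
      have rk: "0 < r k" by (rule r_pos)
      have good: "good (Suc j) x y \<gamma>"
        unfolding good_def using gp P uk dxu k rk by auto
      define M where "M = Max (snd ` set \<gamma>)"
      have lv: "\<forall>w\<in>set \<gamma>. snd w \<le> Suc j + (M - Suc j)"
      proof
        fix w assume "w \<in> set \<gamma>"
        then have "snd w \<le> M" unfolding M_def by (intro Max_ge) auto
        then show "snd w \<le> Suc j + (M - Suc j)" by linarith
      qed
      obtain \<gamma>' where G: "good (Suc j) x y \<gamma>'" "\<forall>w\<in>set \<gamma>'. snd w \<le> Suc j" "lcost E \<gamma>' \<le> lcost E \<gamma>"
        using reduce_all[OF good lv] by blast
      have fb: "ps (par (fst (hd \<gamma>')) (Suc j), j) \<le> lcost E \<gamma>'"
        by (rule final_bound[OF G(1,2) dj])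
      have g': "\<gamma>' \<noteq> []" "set \<gamma>' \<subseteq> V" "Suc j \<le> snd (hd \<gamma>')"
        "dist x (fst (hd \<gamma>')) < 2 * r (snd (hd \<gamma>'))"
        using G(1) unfolding good_def by auto
      have hV: "hd \<gamma>' \<in> V" using g' hd_in_set by blast
      have hl: "snd (hd \<gamma>') = Suc j" using G(2) g' hd_in_set by fastforce
      have pb: "\<eta>m^2 * pw c / K0^2 \<le> ps (par (fst (hd \<gamma>')) (Suc j), j)"
        using pic_bound[OF xX hV _ _ cprops] hl g'(4) unfolding j_def by simp
      have pl: "path_len \<rho> K0 \<eta>m X a lam Xs par \<gamma> = lcost E \<gamma>"
        unfolding path_len_def using lcost_sum[of E \<gamma>] by simp
      have "pi_c \<rho> par X a Xs x y / K2 = \<eta>m^2 * pw c / K0^2"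
        unfolding pic K2_def using em0 by (simp add: field_simps)
      then show "pi_c \<rho> par X a Xs x y / K2 \<le> path_len \<rho> K0 \<eta>m X a lam Xs par \<gamma>"
        using pb fb G(3) pl by linarith
    qed
  qed
qed

end
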